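(* Let $\Gamma$ be a group, $M$ a $\Gamma$-module, and $\Delta$ the subgroup of $\Gamma$ consisting of the elements acting trivially on $M$. Then the inflation map $H^1(\Gamma/\Delta,M)\to H^1(\Gamma,M)$ restricts to an isomorphism $H^1_{\rm loc}(\Gamma/\Delta,M)\cong H^1_{\rm loc}(\Gamma,M)$.
   Context: For a group $\Gamma$ and a $\Gamma$-module $M$, $H^1_{\rm loc}(\Gamma,M)$ is the subgroup of $H^1(\Gamma,M)$ consisting of the classes $[Z]$ of cocycles $Z$ such that for every $\gamma\in\Gamma$ there exists $m_\gamma\in M$ with $Z_\gamma=\gamma m_\gamma-m_\gamma$. *)

theory Defs
  imports "HOL-Algebra.Algebra" "HOL-Library.FuncSet"
begin

text \<open>A (left) Gamma-module: an abelian group M (written multiplicatively, as is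
usual in HOL-Algebra) with an action of the group G by group automorphisms.\<close>
definition gmodule :: "('g, 'a) monoid_scheme \<Rightarrow> ('m, 'b) monoid_scheme \<Rightarrow> ('g \<Rightarrow> 'm \<Rightarrow> 'm) \<Rightarrow> bool" where
  "gmodule G M act \<longleftrightarrow> group G \<and> comm_group M
     \<and> (\<forall>g\<in>carrier G. \<forall>m\<in>carrier M. act g m \<in> carrier M)
     \<and> (\<forall>m\<in>carrier M. act \<one>\<^bsub>G\<^esub> m = m)
     \<and> (\<forall>g\<in>carrier G. \<forall>h\<in>carrier G. \<forall>m\<in>carrier M. act (g \<otimes>\<^bsub>G\<^esub> h) m = act g (act h m))
     \<and> (\<forall>g\<in>carrier G. \<forall>m\<in>carrier M. \<forall>n\<in>carrier M. act g (m \<otimes>\<^bsub>M\<^esub> n) = act g m \<otimes>\<^bsub>M\<^esub> act g n)"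

definition cocycles :: "('g, 'a) monoid_scheme \<Rightarrow> ('m, 'b) monoid_scheme \<Rightarrow> ('g \<Rightarrow> 'm \<Rightarrow> 'm) \<Rightarrow> ('g \<Rightarrow> 'm) set" where
  "cocycles G M act = {Z \<in> carrier G \<rightarrow>\<^sub>E carrier M.
      \<forall>g\<in>carrier G. \<forall>h\<in>carrier G. Z (g \<otimes>\<^bsub>G\<^esub> h) = Z g \<otimes>\<^bsub>M\<^esub> act g (Z h)}"

definition coboundary :: "('g, 'a) monoid_scheme \<Rightarrow> ('m, 'b) monoid_scheme \<Rightarrow> ('g \<Rightarrow> 'm \<Rightarrow> 'm) \<Rightarrow> ('g \<Rightarrow> 'm) \<Rightarrow> bool" where
  "coboundary G M act Z \<longleftrightarrow> (\<exists>m\<in>carrier M. \<forall>g\<in>carrier G. Z g = act g m \<otimes>\<^bsub>M\<^esub> inv\<^bsub>M\<^esub> m)"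

definition cclass :: "('g, 'a) monoid_scheme \<Rightarrow> ('m, 'b) monoid_scheme \<Rightarrow> ('g \<Rightarrow> 'm \<Rightarrow> 'm) \<Rightarrow> ('g \<Rightarrow> 'm) \<Rightarrow> ('g \<Rightarrow> 'm) set" where
  "cclass G M act Z = {Z' \<in> cocycles G M act.
      coboundary G M act (\<lambda>g. Z' g \<otimes>\<^bsub>M\<^esub> inv\<^bsub>M\<^esub> Z g)}"

definition H1 :: "('g, 'a) monoid_scheme \<Rightarrow> ('m, 'b) monoid_scheme \<Rightarrow> ('g \<Rightarrow> 'm \<Rightarrow> 'm) \<Rightarrow> ('g \<Rightarrow> 'm) set monoid" where
  "H1 G M act = \<lparr> carrier = cclass G M act ` cocycles G M act,
      monoid.mult = (\<lambda>A B. cclass G M act (\<lambda>g\<in>carrier G. (SOME Z. Z \<in> A) g \<otimes>\<^bsub>M\<^esub> (SOME Z. Z \<in> B) g)),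
      monoid.one = cclass G M act (\<lambda>g\<in>carrier G. \<one>\<^bsub>M\<^esub>) \<rparr>"

definition loc_trivial :: "('g, 'a) monoid_scheme \<Rightarrow> ('m, 'b) monoid_scheme \<Rightarrow> ('g \<Rightarrow> 'm \<Rightarrow> 'm) \<Rightarrow> ('g \<Rightarrow> 'm) \<Rightarrow> bool" where
  "loc_trivial G M act Z \<longleftrightarrow> (\<forall>g\<in>carrier G. \<exists>m\<in>carrier M. Z g = act g m \<otimes>\<^bsub>M\<^esub> inv\<^bsub>M\<^esub> m)"

definition H1_loc :: "('g, 'a) monoid_scheme \<Rightarrow> ('m, 'b) monoid_scheme \<Rightarrow> ('g \<Rightarrow> 'm \<Rightarrow> 'm) \<Rightarrow> ('g \<Rightarrow> 'm) set monoid" where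
  "H1_loc G M act = (H1 G M act) \<lparr> carrier :=
      {C \<in> carrier (H1 G M act). \<exists>Z\<in>C. loc_trivial G M act Z} \<rparr>"

definition triv_kernel :: "('g, 'a) monoid_scheme \<Rightarrow> ('m, 'b) monoid_scheme \<Rightarrow> ('g \<Rightarrow> 'm \<Rightarrow> 'm) \<Rightarrow> 'g set" where
  "triv_kernel G M act = {g \<in> carrier G. \<forall>m\<in>carrier M. act g m = m}"

definition quot_act :: "('g \<Rightarrow> 'm \<Rightarrow> 'm) \<Rightarrow> 'g set \<Rightarrow> 'm \<Rightarrow> 'm" where
  "quot_act act C m = act (SOME g. g \<in> C) m"

definition inflation :: "('g, 'a) monoid_scheme \<Rightarrow> ('m, 'b) monoid_scheme \<Rightarrow> ('g \<Rightarrow> 'm \<Rightarrow> 'm) \<Rightarrow> ('g set \<Rightarrow> 'm) set \<Rightarrow> ('g \<Rightarrow> 'm) set" where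
  "inflation G M act C = cclass G M act
      (\<lambda>g\<in>carrier G. (SOME Z. Z \<in> C) (triv_kernel G M act #>\<^bsub>G\<^esub> g))"

end

theory Submission imports Defs begin

locale gmod = G: group G + M: comm_group M
  for G :: "('g,'a) monoid_scheme" and M :: "('m,'b) monoid_scheme" +
  fixes act :: "'g \<Rightarrow> 'm \<Rightarrow> 'm"
  assumes act_closed: "g\<in>carrier G \<Longrightarrow> m\<in>carrier M \<Longrightarrow> act g m \<in> carrier M"
  and act_one: "m\<in>carrier M \<Longrightarrow> act \<one>\<^bsub>G\<^esub> m = m"
  and act_mult: "g\<in>carrier G \<Longrightarrow> h\<in>carrier G \<Longrightarrow> m\<in>carrier M \<Longrightarrow> act (g \<otimes>\<^bsub>G\<^esub> h) m = act g (act h m)"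
  and act_hom: "g\<in>carrier G \<Longrightarrow> m\<in>carrier M \<Longrightarrow> n\<in>carrier M \<Longrightarrow> act g (m \<otimes>\<^bsub>M\<^esub> n) = act g m \<otimes>\<^bsub>M\<^esub> act g n"

lemma gmodule_gmod: "gmodule G M act \<Longrightarrow> gmod G M act"
  unfolding gmodule_def gmod_def gmod_axioms_def by auto

lemma H1_loc_carrier: "carrier (H1_loc GG NN aa) = {C \<in> cclass GG NN aa ` cocycles GG NN aa. \<exists>Z\<in>C. loc_trivial GG NN aa Z}"
  by (simp add: H1_loc_def H1_def)

lemma H1_loc_mult: "monoid.mult (H1_loc GG NN aa) = monoid.mult (H1 GG NN aa)"
  by (simp add: H1_loc_def)


context gmod begin

lemma act_oneM: "g\<in>carrier G \<Longrightarrow> act g \<one>\<^bsub>M\<^esub> = \<one>\<^bsub>M\<^esub>"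
proof -
  assume g: "g\<in>carrier G"
  have "act g \<one>\<^bsub>M\<^esub> \<otimes>\<^bsub>M\<^esub> \<one>\<^bsub>M\<^esub> = act g \<one>\<^bsub>M\<^esub> \<otimes>\<^bsub>M\<^esub> act g \<one>\<^bsub>M\<^esub>"
    using act_hom[OF g, of "\<one>\<^bsub>M\<^esub>" "\<one>\<^bsub>M\<^esub>"] act_closed[OF g] by simp
  then show ?thesis using act_closed[OF g] M.l_cancel by (metis M.one_closed)
qed

lemma act_inv: "g\<in>carrier G \<Longrightarrow> m\<in>carrier M \<Longrightarrow> act g (inv\<^bsub>M\<^esub> m) = inv\<^bsub>M\<^esub> (act g m)"
proof -
  assume g: "g\<in>carrier G" and m: "m\<in>carrier M"
  have "act g (inv\<^bsub>M\<^esub> m) \<otimes>\<^bsub>M\<^esub> act g m = \<one>\<^bsub>M\<^esub>"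
    using act_hom[OF g, of "inv\<^bsub>M\<^esub> m" m] m act_oneM[OF g] by simp
  then show ?thesis using M.inv_equality act_closed g m by (metis M.inv_closed)
qed

definition coh :: "('g \<Rightarrow> 'm) \<Rightarrow> ('g \<Rightarrow> 'm) \<Rightarrow> bool" where
  "coh Z Z' \<longleftrightarrow> (\<exists>m\<in>carrier M. \<forall>g\<in>carrier G. Z' g = (act g m \<otimes>\<^bsub>M\<^esub> inv\<^bsub>M\<^esub> m) \<otimes>\<^bsub>M\<^esub> Z g)"

lemma cocycle_closed: "Z \<in> cocycles G M act \<Longrightarrow> g \<in> carrier G \<Longrightarrow> Z g \<in> carrier M"
  unfolding cocycles_def by auto

lemma cclass_iff: "Z \<in> cocycles G M act \<Longrightarrow> Z' \<in> cclass G M act Z \<longleftrightarrow> Z' \<in> cocycles G M act \<and> coh Z Z'"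
proof -
  assume Z: "Z \<in> cocycles G M act"
  have "\<And>g m. g \<in> carrier G \<Longrightarrow> m \<in> carrier M \<Longrightarrow> Z' \<in> cocycles G M act \<Longrightarrow>
     (Z' g \<otimes>\<^bsub>M\<^esub> inv\<^bsub>M\<^esub> Z g = act g m \<otimes>\<^bsub>M\<^esub> inv\<^bsub>M\<^esub> m) = (Z' g = (act g m \<otimes>\<^bsub>M\<^esub> inv\<^bsub>M\<^esub> m) \<otimes>\<^bsub>M\<^esub> Z g)"
  proof -
    fix g m assume g: "g \<in> carrier G" and m: "m \<in> carrier M" and Z': "Z' \<in> cocycles G M act"
    have a: "Z g \<in> carrier M" "Z' g \<in> carrier M" "act g m \<otimes>\<^bsub>M\<^esub> inv\<^bsub>M\<^esub> m \<in> carrier M"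
      using cocycle_closed Z Z' g m act_closed by auto
    show "?thesis g m" using a
      by (metis M.inv_closed M.m_assoc M.r_inv M.r_one M.l_inv M.m_closed)
  qed
  then show ?thesis unfolding cclass_def coboundary_def coh_def by (auto 0 3)
qed

definition cb :: "'m \<Rightarrow> 'g \<Rightarrow> 'm" where "cb m g = act g m \<otimes>\<^bsub>M\<^esub> inv\<^bsub>M\<^esub> m"

lemma cb_closed: "m \<in> carrier M \<Longrightarrow> g \<in> carrier G \<Longrightarrow> cb m g \<in> carrier M"
  unfolding cb_def using act_closed by auto

lemma cb_one: "g \<in> carrier G \<Longrightarrow> cb \<one>\<^bsub>M\<^esub> g = \<one>\<^bsub>M\<^esub>"
  unfolding cb_def using act_oneM by simp

lemma cb_mult: "m \<in> carrier M \<Longrightarrow> n \<in> carrier M \<Longrightarrow> g \<in> carrier G \<Longrightarrow> cb (m \<otimes>\<^bsub>M\<^esub> n) g = cb m g \<otimes>\<^bsub>M\<^esub> cb n g"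
  unfolding cb_def using act_closed act_hom by (simp add: M.inv_mult M.m_ac)

lemma cb_inv: "m \<in> carrier M \<Longrightarrow> g \<in> carrier G \<Longrightarrow> cb (inv\<^bsub>M\<^esub> m) g = inv\<^bsub>M\<^esub> (cb m g)"
  unfolding cb_def using act_closed act_inv by (simp add: M.inv_mult M.m_ac)

lemma coh_alt: "coh Z Z' \<longleftrightarrow> (\<exists>m\<in>carrier M. \<forall>g\<in>carrier G. Z' g = cb m g \<otimes>\<^bsub>M\<^esub> Z g)"
  unfolding coh_def cb_def ..

lemma coh_refl: "Z \<in> cocycles G M act \<Longrightarrow> coh Z Z"
  unfolding coh_alt using cb_one cocycle_closed by (intro bexI[of _ "\<one>\<^bsub>M\<^esub>"]) auto

lemma coh_sym: assumes Z: "Z \<in> cocycles G M act" "Z' \<in> cocycles G M act" and c: "coh Z Z'"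
  shows "coh Z' Z"
proof -
  from c obtain m where m: "m \<in> carrier M" "\<forall>g\<in>carrier G. Z' g = cb m g \<otimes>\<^bsub>M\<^esub> Z g" unfolding coh_alt by auto
  show ?thesis unfolding coh_alt
  proof (intro bexI[of _ "inv\<^bsub>M\<^esub> m"] ballI)
    fix g assume g: "g \<in> carrier G"
    have a: "cb m g \<in> carrier M" "Z g \<in> carrier M" using cb_closed m g cocycle_closed Z by auto
    show "Z g = cb (inv\<^bsub>M\<^esub> m) g \<otimes>\<^bsub>M\<^esub> Z' g"
      using m g a by (simp add: cb_inv M.m_assoc[symmetric])
  qed (use m in auto)
qed

lemma coh_trans: assumes Z: "Z \<in> cocycles G M act" and c: "coh Z Z'" "coh Z' Z''"
  shows "coh Z Z''"
proof -
  from c obtain m n where m: "m \<in> carrier M" "\<forall>g\<in>carrier G. Z' g = cb m g \<otimes>\<^bsub>M\<^esub> Z g"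
     and n: "n \<in> carrier M" "\<forall>g\<in>carrier G. Z'' g = cb n g \<otimes>\<^bsub>M\<^esub> Z' g" unfolding coh_alt by auto
  show ?thesis unfolding coh_alt
  proof (intro bexI[of _ "n \<otimes>\<^bsub>M\<^esub> m"] ballI)
    fix g assume g: "g \<in> carrier G"
    show "Z'' g = cb (n \<otimes>\<^bsub>M\<^esub> m) g \<otimes>\<^bsub>M\<^esub> Z g"
      using m n g cb_closed cocycle_closed[OF Z g] by (simp add: cb_mult M.m_assoc)
  qed (use m n in auto)
qed

lemma cc_self: "Z \<in> cocycles G M act \<Longrightarrow> Z \<in> cclass G M act Z"
  using cclass_iff coh_refl by blast

lemma cc_eq: assumes "Z \<in> cocycles G M act" "Z' \<in> cclass G M act Z"
  shows "cclass G M act Z' = cclass G M act Z"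
proof -
  have Z': "Z' \<in> cocycles G M act" "coh Z Z'" using assms cclass_iff by auto
  show ?thesis
    using cclass_iff[OF assms(1)] cclass_iff[OF Z'(1)] coh_sym[OF assms(1) Z'] coh_trans assms(1) Z'
    by blast
qed

lemma cc_eq_iff: assumes "Z \<in> cocycles G M act" "Z' \<in> cocycles G M act"
  shows "cclass G M act Z = cclass G M act Z' \<longleftrightarrow> coh Z Z'"
  using cc_eq cc_self cclass_iff assms by metis

definition prd :: "('g \<Rightarrow> 'm) \<Rightarrow> ('g \<Rightarrow> 'm) \<Rightarrow> 'g \<Rightarrow> 'm" where
  "prd Z1 Z2 = (\<lambda>g\<in>carrier G. Z1 g \<otimes>\<^bsub>M\<^esub> Z2 g)"

lemma prd_cocycle: assumes "Z1 \<in> cocycles G M act" "Z2 \<in> cocycles G M act"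
  shows "prd Z1 Z2 \<in> cocycles G M act"
proof -
  have "\<And>g h. g \<in> carrier G \<Longrightarrow> h \<in> carrier G \<Longrightarrow>
     Z1 (g \<otimes>\<^bsub>G\<^esub> h) \<otimes>\<^bsub>M\<^esub> Z2 (g \<otimes>\<^bsub>G\<^esub> h) = (Z1 g \<otimes>\<^bsub>M\<^esub> Z2 g) \<otimes>\<^bsub>M\<^esub> act g (Z1 h \<otimes>\<^bsub>M\<^esub> Z2 h)"
  proof -
    fix g h assume g: "g \<in> carrier G" and h: "h \<in> carrier G"
    have e: "Z1 (g \<otimes>\<^bsub>G\<^esub> h) = Z1 g \<otimes>\<^bsub>M\<^esub> act g (Z1 h)" "Z2 (g \<otimes>\<^bsub>G\<^esub> h) = Z2 g \<otimes>\<^bsub>M\<^esub> act g (Z2 h)"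
      using assms g h unfolding cocycles_def by auto
    have c: "Z1 g \<in> carrier M" "Z2 g \<in> carrier M" "act g (Z1 h) \<in> carrier M" "act g (Z2 h) \<in> carrier M"
      "Z1 h \<in> carrier M" "Z2 h \<in> carrier M"
      using cocycle_closed assms g h act_closed by auto
    show "?thesis g h" unfolding e using c g by (simp add: act_hom M.m_ac)
  qed
  then show ?thesis using assms cocycle_closed unfolding cocycles_def prd_def by auto
qed

lemma prd_coh: assumes Z: "Z1 \<in> cocycles G M act" "Z2 \<in> cocycles G M act"
  and c: "coh Z1 Z1'" "coh Z2 Z2'"
  shows "coh (prd Z1 Z2) (prd Z1' Z2')"
proof -
  from c obtain m n where m: "m \<in> carrier M" "\<forall>g\<in>carrier G. Z1' g = cb m g \<otimes>\<^bsub>M\<^esub> Z1 g"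
     and n: "n \<in> carrier M" "\<forall>g\<in>carrier G. Z2' g = cb n g \<otimes>\<^bsub>M\<^esub> Z2 g" unfolding coh_alt by auto
  show ?thesis unfolding coh_alt
  proof (intro bexI[of _ "m \<otimes>\<^bsub>M\<^esub> n"] ballI)
    fix g assume g: "g \<in> carrier G"
    show "prd Z1' Z2' g = cb (m \<otimes>\<^bsub>M\<^esub> n) g \<otimes>\<^bsub>M\<^esub> prd Z1 Z2 g"
      using m n g cb_closed cocycle_closed[OF Z(1) g] cocycle_closed[OF Z(2) g]
      by (simp add: prd_def cb_mult M.m_ac)
  qed (use m n in auto)
qed

lemma H1_mult: assumes Z: "Z1 \<in> cocycles G M act" "Z2 \<in> cocycles G M act"
  shows "cclass G M act Z1 \<otimes>\<^bsub>H1 G M act\<^esub> cclass G M act Z2 = cclass G M act (prd Z1 Z2)"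
proof -
  define S1 where "S1 = (SOME Z. Z \<in> cclass G M act Z1)"
  define S2 where "S2 = (SOME Z. Z \<in> cclass G M act Z2)"
  have S1: "S1 \<in> cclass G M act Z1" unfolding S1_def using cc_self[OF Z(1)] by (metis someI)
  have S2: "S2 \<in> cclass G M act Z2" unfolding S2_def using cc_self[OF Z(2)] by (metis someI)
  have S: "S1 \<in> cocycles G M act" "coh Z1 S1" "S2 \<in> cocycles G M act" "coh Z2 S2"
    using S1 S2 cclass_iff Z by auto
  have "prd S1 S2 \<in> cclass G M act (prd Z1 Z2)"
    using cclass_iff prd_cocycle prd_coh Z S by blast
  then have "cclass G M act (prd S1 S2) = cclass G M act (prd Z1 Z2)"
    using cc_eq prd_cocycle Z by blast
  moreover have "cclass G M act Z1 \<otimes>\<^bsub>H1 G M act\<^esub> cclass G M act Z2 = cclass G M act (prd S1 S2)"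
    unfolding H1_def prd_def S1_def S2_def by simp
  ultimately show ?thesis by simp
qed

abbreviation "D \<equiv> triv_kernel G M act"

lemma D_sub: "D \<subseteq> carrier G" unfolding triv_kernel_def by auto

lemma D_normal: "D \<lhd> G"
proof -
  have sg: "subgroup D G"
  proof (rule G.subgroupI)
    show "D \<subseteq> carrier G" by (rule D_sub)
    show "D \<noteq> {}" using act_one unfolding triv_kernel_def by auto
  next
    fix a assume a: "a \<in> D"
    then have ag: "a \<in> carrier G" unfolding triv_kernel_def by auto
    have "\<And>m. m \<in> carrier M \<Longrightarrow> act (inv\<^bsub>G\<^esub> a) m = m"
    proof -
      fix m assume m: "m \<in> carrier M"
      have "act (inv\<^bsub>G\<^esub> a) m = act (inv\<^bsub>G\<^esub> a) (act a m)" using a m unfolding triv_kernel_def by auto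
      also have "\<dots> = m" using act_mult[symmetric, of "inv\<^bsub>G\<^esub> a" a m] ag m act_one by simp
      finally show "act (inv\<^bsub>G\<^esub> a) m = m" .
    qed
    then show "inv\<^bsub>G\<^esub> a \<in> D" using ag unfolding triv_kernel_def by auto
  next
    fix a b assume "a \<in> D" "b \<in> D"
    then show "a \<otimes>\<^bsub>G\<^esub> b \<in> D" unfolding triv_kernel_def by (auto simp: act_mult)
  qed
  have "\<And>x h. x \<in> carrier G \<Longrightarrow> h \<in> D \<Longrightarrow> x \<otimes>\<^bsub>G\<^esub> h \<otimes>\<^bsub>G\<^esub> inv\<^bsub>G\<^esub> x \<in> D"
  proof -
    fix x h assume x: "x \<in> carrier G" and h: "h \<in> D"
    then have hg: "h \<in> carrier G" unfolding triv_kernel_def by auto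
    have "\<And>m. m \<in> carrier M \<Longrightarrow> act (x \<otimes>\<^bsub>G\<^esub> h \<otimes>\<^bsub>G\<^esub> inv\<^bsub>G\<^esub> x) m = m"
    proof -
      fix m assume m: "m \<in> carrier M"
      have "act (x \<otimes>\<^bsub>G\<^esub> h \<otimes>\<^bsub>G\<^esub> inv\<^bsub>G\<^esub> x) m = act x (act h (act (inv\<^bsub>G\<^esub> x) m))"
        using x hg m by (simp add: act_mult act_closed)
      also have "\<dots> = act x (act (inv\<^bsub>G\<^esub> x) m)" using h m x act_closed unfolding triv_kernel_def by auto
      also have "\<dots> = m" using act_mult[symmetric, of x "inv\<^bsub>G\<^esub> x" m] x m act_one by simp
      finally show "?thesis m" .
    qed
    then show "?thesis x h" using x hg unfolding triv_kernel_def by auto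
  qed
  then show ?thesis using sg G.normal_inv_iff by blast
qed

lemma rcos_elem: "g \<in> carrier G \<Longrightarrow> x \<in> D #>\<^bsub>G\<^esub> g \<Longrightarrow> x \<in> carrier G \<and> (\<forall>m\<in>carrier M. act x m = act g m)"
proof -
  assume g: "g \<in> carrier G" and x: "x \<in> D #>\<^bsub>G\<^esub> g"
  then obtain d where d: "d \<in> D" "x = d \<otimes>\<^bsub>G\<^esub> g" unfolding r_coset_def by auto
  then have dg: "d \<in> carrier G" using D_sub by auto
  show ?thesis using d dg g act_closed unfolding triv_kernel_def by (auto simp: act_mult)
qed

lemma rcos_self_mem: "g \<in> carrier G \<Longrightarrow> g \<in> D #>\<^bsub>G\<^esub> g"
  using normal.axioms(1)[OF D_normal] subgroup.one_closed unfolding r_coset_def by fastforce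

lemma qa_rep: "g \<in> carrier G \<Longrightarrow> m \<in> carrier M \<Longrightarrow> quot_act act (D #>\<^bsub>G\<^esub> g) m = act g m"
proof -
  assume g: "g \<in> carrier G" and m: "m \<in> carrier M"
  have "(SOME x. x \<in> D #>\<^bsub>G\<^esub> g) \<in> D #>\<^bsub>G\<^esub> g" using rcos_self_mem[OF g] by (metis someI)
  then show ?thesis unfolding quot_act_def using rcos_elem[OF g] m by blast
qed

lemma Q_mult: "g \<in> carrier G \<Longrightarrow> h \<in> carrier G \<Longrightarrow>
   (D #>\<^bsub>G\<^esub> g) \<otimes>\<^bsub>G Mod D\<^esub> (D #>\<^bsub>G\<^esub> h) = D #>\<^bsub>G\<^esub> (g \<otimes>\<^bsub>G\<^esub> h)"
  using normal.rcos_sum[OF D_normal] by simp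

lemma Q_mult2: "g \<in> carrier G \<Longrightarrow> h \<in> carrier G \<Longrightarrow>
   (D #>\<^bsub>G\<^esub> g) <#>\<^bsub>G\<^esub> (D #>\<^bsub>G\<^esub> h) = D #>\<^bsub>G\<^esub> (g \<otimes>\<^bsub>G\<^esub> h)"
  using normal.rcos_sum[OF D_normal] by simp

lemma qa_D: "m \<in> carrier M \<Longrightarrow> quot_act act D m = m"
  using qa_rep[of "\<one>\<^bsub>G\<^esub>" m] D_sub act_one by simp

lemma Q_carrier: "carrier (G Mod D) = (\<lambda>g. D #>\<^bsub>G\<^esub> g) ` carrier G"
  by (rule carrier_FactGroup)

lemma quot_gmod: "gmod (G Mod D) M (quot_act act)"
proof -
  have grp: "group (G Mod D)" using normal.factorgroup_is_group[OF D_normal] .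
  have one: "\<one>\<^bsub>G Mod D\<^esub> = D #>\<^bsub>G\<^esub> \<one>\<^bsub>G\<^esub>" using D_sub by simp
  show ?thesis
    unfolding gmod_def gmod_axioms_def
    using grp M.comm_group_axioms
    by (auto simp: Q_carrier Q_mult2 qa_D qa_rep act_closed act_one act_mult act_hom)
qed

definition infl :: "('g set \<Rightarrow> 'm) \<Rightarrow> 'g \<Rightarrow> 'm" where
  "infl Z = (\<lambda>g\<in>carrier G. Z (D #>\<^bsub>G\<^esub> g))"

lemma infl_cocycle: assumes Z: "Z \<in> cocycles (G Mod D) M (quot_act act)"
  shows "infl Z \<in> cocycles G M act"
proof -
  have Zc: "\<And>g. g \<in> carrier G \<Longrightarrow> Z (D #>\<^bsub>G\<^esub> g) \<in> carrier M"
    using Z unfolding cocycles_def Q_carrier by auto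
  have "\<And>g h. g \<in> carrier G \<Longrightarrow> h \<in> carrier G \<Longrightarrow>
     Z (D #>\<^bsub>G\<^esub> (g \<otimes>\<^bsub>G\<^esub> h)) = Z (D #>\<^bsub>G\<^esub> g) \<otimes>\<^bsub>M\<^esub> act g (Z (D #>\<^bsub>G\<^esub> h))"
  proof -
    fix g h assume g: "g \<in> carrier G" and h: "h \<in> carrier G"
    have "Z ((D #>\<^bsub>G\<^esub> g) \<otimes>\<^bsub>G Mod D\<^esub> (D #>\<^bsub>G\<^esub> h)) =
       Z (D #>\<^bsub>G\<^esub> g) \<otimes>\<^bsub>M\<^esub> quot_act act (D #>\<^bsub>G\<^esub> g) (Z (D #>\<^bsub>G\<^esub> h))"
      using Z g h unfolding cocycles_def Q_carrier by auto
    then show "?thesis g h" using g h Zc by (simp add: Q_mult2 qa_rep)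
  qed
  then show ?thesis using Zc unfolding cocycles_def infl_def by auto
qed

lemma infl_coh: assumes Z: "Z \<in> cocycles (G Mod D) M (quot_act act)" "Z' \<in> cocycles (G Mod D) M (quot_act act)"
  shows "gmod.coh (G Mod D) M (quot_act act) Z Z' \<longleftrightarrow> coh (infl Z) (infl Z')"
  unfolding gmod.coh_def[OF quot_gmod] coh_def infl_def Q_carrier
  by (auto simp: qa_rep)

lemma infl_prd: assumes Z: "Z1 \<in> cocycles (G Mod D) M (quot_act act)" "Z2 \<in> cocycles (G Mod D) M (quot_act act)"
  shows "infl (gmod.prd (G Mod D) M Z1 Z2) = prd (infl Z1) (infl Z2)"
  unfolding gmod.prd_def[OF quot_gmod] prd_def infl_def Q_carrier
  by (auto simp: fun_eq_iff)

lemma infl_loc: assumes "loc_trivial (G Mod D) M (quot_act act) Z"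
  shows "loc_trivial G M act (infl Z)"
  using assms unfolding loc_trivial_def infl_def Q_carrier by (auto simp: qa_rep)

lemma W_D: assumes W: "W \<in> cocycles G M act" "loc_trivial G M act W" and d: "d \<in> D"
  shows "W d = \<one>\<^bsub>M\<^esub>"
proof -
  have dg: "d \<in> carrier G" using d D_sub by auto
  obtain m where m: "m \<in> carrier M" "W d = act d m \<otimes>\<^bsub>M\<^esub> inv\<^bsub>M\<^esub> m"
    using W(2) dg unfolding loc_trivial_def by auto
  then show ?thesis using d unfolding triv_kernel_def by auto
qed

lemma W_const: assumes W: "W \<in> cocycles G M act" "loc_trivial G M act W" and g: "g \<in> carrier G"
  and x: "x \<in> D #>\<^bsub>G\<^esub> g" shows "W x = W g"
proof -
  obtain d where d: "d \<in> D" "x = d \<otimes>\<^bsub>G\<^esub> g" using x unfolding r_coset_def by auto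
  have dg: "d \<in> carrier G" using d D_sub by auto
  have "W x = W d \<otimes>\<^bsub>M\<^esub> act d (W g)" using W(1) d dg g unfolding cocycles_def by auto
  also have "\<dots> = W g" using W_D[OF W d(1)] d(1) cocycle_closed[OF W(1) g] unfolding triv_kernel_def by auto
  finally show ?thesis .
qed

lemma descent: assumes W: "W \<in> cocycles G M act" "loc_trivial G M act W"
  shows "\<exists>Z \<in> cocycles (G Mod D) M (quot_act act). loc_trivial (G Mod D) M (quot_act act) Z \<and> infl Z = W"
proof -
  define Z where "Z = (\<lambda>C\<in>carrier (G Mod D). W (SOME x. x \<in> C))"
  have Zr: "\<And>g. g \<in> carrier G \<Longrightarrow> Z (D #>\<^bsub>G\<^esub> g) = W g"
  proof -
    fix g assume g: "g \<in> carrier G"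
    have "(SOME x. x \<in> D #>\<^bsub>G\<^esub> g) \<in> D #>\<^bsub>G\<^esub> g" using rcos_self_mem[OF g] by (metis someI)
    then show "Z (D #>\<^bsub>G\<^esub> g) = W g" unfolding Z_def using g W_const[OF W g] Q_carrier by auto
  qed
  have Zc: "Z \<in> cocycles (G Mod D) M (quot_act act)"
    unfolding cocycles_def
  proof (intro CollectI conjI ballI)
    show "Z \<in> carrier (G Mod D) \<rightarrow>\<^sub>E carrier M"
      using Zr cocycle_closed[OF W(1)] unfolding Q_carrier by (auto simp: Z_def[symmetric]) (simp add: Z_def Q_carrier)
  next
    fix C1 C2 assume "C1 \<in> carrier (G Mod D)" "C2 \<in> carrier (G Mod D)"
    then obtain g h where gh: "g \<in> carrier G" "h \<in> carrier G" "C1 = D #>\<^bsub>G\<^esub> g" "C2 = D #>\<^bsub>G\<^esub> h"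
      unfolding Q_carrier by auto
    show "Z (C1 \<otimes>\<^bsub>G Mod D\<^esub> C2) = Z C1 \<otimes>\<^bsub>M\<^esub> quot_act act C1 (Z C2)"
      using gh W(1) cocycle_closed[OF W(1)] unfolding cocycles_def
      by (simp add: Q_mult2 Zr qa_rep)
  qed
  have Zl: "loc_trivial (G Mod D) M (quot_act act) Z"
    using W(2) unfolding loc_trivial_def Q_carrier by (auto simp: Zr qa_rep)
  have "infl Z = W"
  proof
    fix g show "infl Z g = W g"
      using Zr W(1) unfolding infl_def cocycles_def by (cases "g \<in> carrier G") (auto simp: PiE_def extensional_def)
  qed
  then show ?thesis using Zc Zl by blast
qed

lemma infl_class: assumes Z: "Z \<in> cocycles (G Mod D) M (quot_act act)"
  shows "inflation G M act (cclass (G Mod D) M (quot_act act) Z) = cclass G M act (infl Z)"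
proof -
  interpret Q: gmod "G Mod D" M "quot_act act" by (rule quot_gmod)
  define S where "S = (SOME Z'. Z' \<in> cclass (G Mod D) M (quot_act act) Z)"
  have S: "S \<in> cclass (G Mod D) M (quot_act act) Z" unfolding S_def using Q.cc_self[OF Z] by (metis someI)
  have S2: "S \<in> cocycles (G Mod D) M (quot_act act)" "Q.coh Z S" using S Q.cclass_iff Z by auto
  have "coh (infl Z) (infl S)" using infl_coh Z S2 by blast
  then have "cclass G M act (infl Z) = cclass G M act (infl S)"
    using cc_eq_iff infl_cocycle Z S2 by blast
  moreover have "inflation G M act (cclass (G Mod D) M (quot_act act) Z) = cclass G M act (infl S)"
    unfolding inflation_def infl_def S_def by simp
  ultimately show ?thesis by simp
qed

lemma carrier_rep: assumes "C \<in> carrier (H1_loc G M act)"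
  shows "\<exists>Z. Z \<in> cocycles G M act \<and> loc_trivial G M act Z \<and> C = cclass G M act Z"
proof -
  obtain Z0 Z where Z0: "Z0 \<in> cocycles G M act" "C = cclass G M act Z0" and Z: "Z \<in> C" "loc_trivial G M act Z"
    using assms unfolding H1_loc_carrier by auto
  then have "Z \<in> cocycles G M act" "cclass G M act Z = C" using cc_eq cclass_iff by auto
  then show ?thesis using Z by auto
qed

lemma carrier_in: "Z \<in> cocycles G M act \<Longrightarrow> loc_trivial G M act Z \<Longrightarrow> cclass G M act Z \<in> carrier (H1_loc G M act)"
  unfolding H1_loc_carrier using cc_self by auto

theorem main: "inflation G M act \<in> iso (H1_loc (G Mod D) M (quot_act act)) (H1_loc G M act)"
proof -
  interpret Q: gmod "G Mod D" M "quot_act act" by (rule quot_gmod)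
  have maps: "\<And>C. C \<in> carrier (H1_loc (G Mod D) M (quot_act act)) \<Longrightarrow> inflation G M act C \<in> carrier (H1_loc G M act)"
  proof -
    fix C assume "C \<in> carrier (H1_loc (G Mod D) M (quot_act act))"
    then obtain Z where Z: "Z \<in> cocycles (G Mod D) M (quot_act act)" "loc_trivial (G Mod D) M (quot_act act) Z"
      "C = cclass (G Mod D) M (quot_act act) Z" using Q.carrier_rep by blast
    show "inflation G M act C \<in> carrier (H1_loc G M act)"
      using Z infl_class infl_cocycle infl_loc carrier_in by simp
  qed
  have hom: "inflation G M act \<in> hom (H1_loc (G Mod D) M (quot_act act)) (H1_loc G M act)"
    unfolding hom_def
  proof (intro CollectI conjI ballI)
    show "inflation G M act \<in> carrier (H1_loc (G Mod D) M (quot_act act)) \<rightarrow> carrier (H1_loc G M act)"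
      using maps by blast
  next
    fix A B assume "A \<in> carrier (H1_loc (G Mod D) M (quot_act act))" "B \<in> carrier (H1_loc (G Mod D) M (quot_act act))"
    then obtain Z1 Z2 where Z1: "Z1 \<in> cocycles (G Mod D) M (quot_act act)" "A = cclass (G Mod D) M (quot_act act) Z1"
      and Z2: "Z2 \<in> cocycles (G Mod D) M (quot_act act)" "B = cclass (G Mod D) M (quot_act act) Z2"
      using Q.carrier_rep by metis
    have "A \<otimes>\<^bsub>H1_loc (G Mod D) M (quot_act act)\<^esub> B = cclass (G Mod D) M (quot_act act) (Q.prd Z1 Z2)"
      using Q.H1_mult Z1 Z2 by (simp add: H1_loc_mult)
    then have "inflation G M act (A \<otimes>\<^bsub>H1_loc (G Mod D) M (quot_act act)\<^esub> B) = cclass G M act (prd (infl Z1) (infl Z2))"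
      using infl_class Q.prd_cocycle Z1 Z2 infl_prd by simp
    also have "\<dots> = inflation G M act A \<otimes>\<^bsub>H1_loc G M act\<^esub> inflation G M act B"
      using H1_mult infl_cocycle Z1 Z2 infl_class by (simp add: H1_loc_mult)
    finally show "inflation G M act (A \<otimes>\<^bsub>H1_loc (G Mod D) M (quot_act act)\<^esub> B) = inflation G M act A \<otimes>\<^bsub>H1_loc G M act\<^esub> inflation G M act B" .
  qed
  have inj: "inj_on (inflation G M act) (carrier (H1_loc (G Mod D) M (quot_act act)))"
  proof (rule inj_onI)
    fix A B assume "A \<in> carrier (H1_loc (G Mod D) M (quot_act act))" "B \<in> carrier (H1_loc (G Mod D) M (quot_act act))"
      and e: "inflation G M act A = inflation G M act B"
    then obtain Z1 Z2 where Z1: "Z1 \<in> cocycles (G Mod D) M (quot_act act)" "A = cclass (G Mod D) M (quot_act act) Z1"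
      and Z2: "Z2 \<in> cocycles (G Mod D) M (quot_act act)" "B = cclass (G Mod D) M (quot_act act) Z2"
      using Q.carrier_rep by metis
    have "cclass G M act (infl Z1) = cclass G M act (infl Z2)" using e Z1 Z2 infl_class by simp
    then have "coh (infl Z1) (infl Z2)" using cc_eq_iff infl_cocycle Z1 Z2 by blast
    then have "Q.coh Z1 Z2" using infl_coh Z1 Z2 by blast
    then show "A = B" using Q.cc_eq_iff Z1 Z2 by blast
  qed
  have surj: "carrier (H1_loc G M act) \<subseteq> inflation G M act ` carrier (H1_loc (G Mod D) M (quot_act act))"
  proof
    fix C assume "C \<in> carrier (H1_loc G M act)"
    then obtain W where W: "W \<in> cocycles G M act" "loc_trivial G M act W" "C = cclass G M act W"
      using carrier_rep by blast
    obtain Z where Z: "Z \<in> cocycles (G Mod D) M (quot_act act)" "loc_trivial (G Mod D) M (quot_act act) Z" "infl Z = W"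
      using descent[OF W(1,2)] by blast
    have "C = inflation G M act (cclass (G Mod D) M (quot_act act) Z)" using infl_class Z W by simp
    then show "C \<in> inflation G M act ` carrier (H1_loc (G Mod D) M (quot_act act))"
      using Q.carrier_in Z by blast
  qed
  have "bij_betw (inflation G M act) (carrier (H1_loc (G Mod D) M (quot_act act))) (carrier (H1_loc G M act))"
    unfolding bij_betw_def using inj surj maps by blast
  then show ?thesis using hom unfolding iso_def by blast
qed
end

theorem lemma13:
  fixes G :: "('g, 'a) monoid_scheme" and M :: "('m, 'b) monoid_scheme" and act :: "'g \<Rightarrow> 'm \<Rightarrow> 'm"
  assumes "gmodule G M act"
  shows "inflation G M act \<in>
           iso (H1_loc (G Mod triv_kernel G M act) M (quot_act act)) (H1_loc G M act)"
  using gmod.main[OF gmodule_gmod[OF assms]] .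

end
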